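(* Let $G$ be a finite simple connected graph and $H$ an induced subgraph of $G$ with $\mathrm{diam}(H)=2$. If $\beta(H)=n(H)-t$ for some positive integer $t$, then $\beta(G)\le n(G)-t$.
   Context: $n(X)$ denotes the number of vertices of a graph $X$. For an ordered set $W=\{w_1,\dots,w_k\}$ of vertices of a connected graph $X$, $r(v|W)=(d_X(v,w_1),\dots,d_X(v,w_k))$ with $d_X$ the shortest-path distance; $W$ is a resolving set if distinct vertices have distinct vectors $r(\cdot|W)$, and $\beta(X)$, the metric dimension, is the minimum size of a resolving set. *)

theory Defs
  imports Main "HOL-Library.Extended_Nat"
begin

definition simple_graph :: "'a set \<Rightarrow> ('a \<Rightarrow> 'a \<Rightarrow> bool) \<Rightarrow> bool" where
  "simple_graph V E \<longleftrightarrow> finite V \<and> V \<noteq> {} \<and>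
     (\<forall>u v. E u v \<longrightarrow> u \<in> V \<and> v \<in> V) \<and>
     (\<forall>u v. E u v \<longrightarrow> E v u) \<and> (\<forall>u. \<not> E u u)"

fun walk :: "'a set \<Rightarrow> ('a \<Rightarrow> 'a \<Rightarrow> bool) \<Rightarrow> nat \<Rightarrow> 'a \<Rightarrow> 'a \<Rightarrow> bool" where
  "walk V E 0 u v = (u = v \<and> u \<in> V)"
| "walk V E (Suc n) u v = (\<exists>w. u \<in> V \<and> w \<in> V \<and> E u w \<and> walk V E n w v)"

definition connected_graph :: "'a set \<Rightarrow> ('a \<Rightarrow> 'a \<Rightarrow> bool) \<Rightarrow> bool" where
  "connected_graph V E \<longleftrightarrow> V \<noteq> {} \<and> (\<forall>u\<in>V. \<forall>v\<in>V. \<exists>n. walk V E n u v)"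

definition gdist :: "'a set \<Rightarrow> ('a \<Rightarrow> 'a \<Rightarrow> bool) \<Rightarrow> 'a \<Rightarrow> 'a \<Rightarrow> nat" where
  "gdist V E u v = (LEAST n. walk V E n u v)"

definition gdiam :: "'a set \<Rightarrow> ('a \<Rightarrow> 'a \<Rightarrow> bool) \<Rightarrow> enat" where
  "gdiam V E = (if connected_graph V E
      then enat (Max {gdist V E u v | u v. u \<in> V \<and> v \<in> V}) else \<infinity>)"

definition induced_edges :: "('a \<Rightarrow> 'a \<Rightarrow> bool) \<Rightarrow> 'a set \<Rightarrow> 'a \<Rightarrow> 'a \<Rightarrow> bool" where
  "induced_edges E S = (\<lambda>u v. E u v \<and> u \<in> S \<and> v \<in> S)"

definition resolving_set :: "'a set \<Rightarrow> ('a \<Rightarrow> 'a \<Rightarrow> bool) \<Rightarrow> 'a set \<Rightarrow> bool" where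
  "resolving_set V E W \<longleftrightarrow> W \<subseteq> V \<and>
     (\<forall>u\<in>V. \<forall>v\<in>V. (\<forall>w\<in>W. gdist V E u w = gdist V E v w) \<longrightarrow> u = v)"

definition metric_dim :: "'a set \<Rightarrow> ('a \<Rightarrow> 'a \<Rightarrow> bool) \<Rightarrow> nat" where
  "metric_dim V E = Min (card ` {W. resolving_set V E W})"

end

theory Submission
  imports Defs
begin

lemma walk_mono:
  assumes "S \<subseteq> V"
  shows "walk S (induced_edges E S) n u v \<Longrightarrow> walk V E n u v"
proof (induction n arbitrary: u)
  case 0 then show ?case using assms by auto
next
  case (Suc n) then show ?case using assms by (auto simp: induced_edges_def)
qed

lemma walk_small:
  assumes "S \<subseteq> V" "n \<le> 1" "u \<in> S" "w \<in> S" "walk V E n u w"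
  shows "walk S (induced_edges E S) n u w"
proof -
  have "n = 0 \<or> n = 1" using assms(2) by auto
  then show ?thesis using assms by (auto simp: induced_edges_def)
qed

lemma gdist_walk:
  assumes "walk V E n u v"
  shows "walk V E (gdist V E u v) u v" "gdist V E u v \<le> n"
  using assms unfolding gdist_def by (auto intro: LeastI Least_le)

lemma gdist_eq:
  assumes "S \<subseteq> V" "u \<in> S" "w \<in> S" "walk S (induced_edges E S) n u w"
    and le2: "gdist S (induced_edges E S) u w \<le> 2"
  shows "gdist V E u w = gdist S (induced_edges E S) u w"
proof -
  let ?H = "induced_edges E S"
  have wH: "walk S ?H (gdist S ?H u w) u w" using gdist_walk(1)[OF assms(4)] .
  have wG: "walk V E (gdist S ?H u w) u w" using walk_mono[OF assms(1) wH] .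
  have a: "gdist V E u w \<le> gdist S ?H u w" using gdist_walk(2)[OF wG] .
  have wG': "walk V E (gdist V E u w) u w" using gdist_walk(1)[OF wG] .
  show ?thesis
  proof (cases "gdist V E u w \<le> 1")
    case True
    have "walk S ?H (gdist V E u w) u w"
      using walk_small[OF assms(1) True assms(2,3) wG'] .
    then have "gdist S ?H u w \<le> gdist V E u w" by (rule gdist_walk(2))
    then show ?thesis using a by simp
  next
    case False then show ?thesis using a le2 by simp
  qed
qed

lemma gd0: "gdist X F u v = 0 \<Longrightarrow> walk X F n u v \<Longrightarrow> u = v"
  using gdist_walk(1)[of X F n u v] by simp
lemma gdself: "u \<in> X \<Longrightarrow> gdist X F u u = 0"
  unfolding gdist_def by (rule Least_eq_0) simp

theorem corollary2p6:
  fixes V S :: "'a set" and E :: "'a \<Rightarrow> 'a \<Rightarrow> bool" and t :: nat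
  assumes "simple_graph V E" and "connected_graph V E"
    and "S \<subseteq> V"
    and "gdiam S (induced_edges E S) = 2"
    and "t > 0"
    and "int (metric_dim S (induced_edges E S)) = int (card S) - int t"
  shows "int (metric_dim V E) \<le> int (card V) - int t"
proof -
  let ?H = "induced_edges E S"
  have finV: "finite V" using assms(1) by (simp add: simple_graph_def)
  have finS: "finite S" using finV assms(3) finite_subset by blast
  have connS: "connected_graph S ?H"
    using assms(4) unfolding gdiam_def by (auto split: if_splits)
  have le2: "gdist S ?H u w \<le> 2" if "u \<in> S" "w \<in> S" for u w
  proof -
    have fin: "finite {gdist S ?H u v | u v. u \<in> S \<and> v \<in> S}"
    proof -
      have "{gdist S ?H u v | u v. u \<in> S \<and> v \<in> S} = (\<lambda>(u,v). gdist S ?H u v) ` (S \<times> S)"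
        by auto
      then show ?thesis using finS by simp
    qed
    have "gdist S ?H u w \<le> Max {gdist S ?H u v | u v. u \<in> S \<and> v \<in> S}"
      using that by (intro Max_ge[OF fin]) auto
    moreover have "Max {gdist S ?H u v | u v. u \<in> S \<and> v \<in> S} = 2"
      using assms(4) connS unfolding gdiam_def by (simp add: numeral_eq_enat)
    ultimately show ?thesis by simp
  qed
  have Sres: "resolving_set S ?H S"
    unfolding resolving_set_def
  proof (intro conjI ballI impI)
    fix u v assume uv: "u \<in> S" "v \<in> S" and h: "\<forall>w\<in>S. gdist S ?H u w = gdist S ?H v w"
    have "gdist S ?H u v = 0" using h uv gdself by metis
    moreover obtain n where "walk S ?H n u v" using connS uv unfolding connected_graph_def by blast
    ultimately show "u = v" by (rule gd0)
  qed simp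
  have finR: "finite (card ` {W. resolving_set S ?H W})"
    using finS unfolding resolving_set_def by (auto intro: finite_subset[of _ "card ` Pow S"])
  have "metric_dim S ?H \<in> card ` {W. resolving_set S ?H W}"
    unfolding metric_dim_def using finR Sres by (intro Min_in) auto
  then obtain WH where WH: "resolving_set S ?H WH" "card WH = metric_dim S ?H" by auto
  have WHS: "WH \<subseteq> S" using WH(1) unfolding resolving_set_def by simp
  define W where "W = WH \<union> (V - S)"
  have Wres: "resolving_set V E W"
    unfolding resolving_set_def
  proof (intro conjI ballI impI)
    show "W \<subseteq> V" using WHS assms(3) W_def by auto
    fix u v assume uv: "u \<in> V" "v \<in> V" and h: "\<forall>w\<in>W. gdist V E u w = gdist V E v w"
    obtain n where n: "walk V E n u v" using assms(2) uv unfolding connected_graph_def by blast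
    obtain m where m: "walk V E m v u" using assms(2) uv unfolding connected_graph_def by blast
    show "u = v"
    proof (cases "u \<in> S \<and> v \<in> S")
      case True
      have "\<forall>w\<in>WH. gdist S ?H u w = gdist S ?H v w"
      proof
        fix w assume w: "w \<in> WH"
        have wS: "w \<in> S" using w WHS by auto
        obtain a where a: "walk S ?H a u w" using connS True wS unfolding connected_graph_def by blast
        obtain b where b: "walk S ?H b v w" using connS True wS unfolding connected_graph_def by blast
        have "gdist V E u w = gdist S ?H u w"
          using gdist_eq[OF assms(3) _ wS a le2] True wS by auto
        moreover have "gdist V E v w = gdist S ?H v w"
          using gdist_eq[OF assms(3) _ wS b le2] True wS by auto
        moreover have "gdist V E u w = gdist V E v w" using h w W_def by auto
        ultimately show "gdist S ?H u w = gdist S ?H v w" by simp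
      qed
      then show ?thesis using WH(1) True unfolding resolving_set_def by blast
    next
      case False
      then have "u \<notin> S \<or> v \<notin> S" by blast
      then show ?thesis
      proof
        assume "u \<notin> S"
        then have "u \<in> W" using uv W_def by auto
        then have "gdist V E v u = 0" using h gdself uv by metis
        then show ?thesis using gd0 m by metis
      next
        assume "v \<notin> S"
        then have "v \<in> W" using uv W_def by auto
        then have "gdist V E u v = 0" using h gdself uv by metis
        then show ?thesis using gd0 n by metis
      qed
    qed
  qed
  have finRV: "finite (card ` {W. resolving_set V E W})"
    using finV unfolding resolving_set_def by (auto intro: finite_subset[of _ "card ` Pow V"])
  have md: "metric_dim V E \<le> card W"
    unfolding metric_dim_def using finRV Wres by (intro Min_le) auto
  have "card W \<le> card WH + card (V - S)"
    unfolding W_def by (rule card_Un_le)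
  moreover have "card (V - S) = card V - card S" using assms(3) finS by (simp add: card_Diff_subset)
  moreover have "card S \<le> card V" using assms(3) finV card_mono by blast
  ultimately show ?thesis using md WH(2) assms(6) by linarith
qed

end
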